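(* Let $B_1,B_2>0$, $\mathcal{W}=\{\mathbf{w}\in\mathbb{R}^d\colon\|\mathbf{w}\|<B_1\}$ and $\mathcal{X}=\{\mathbf{x}\in\mathbb{R}^d\colon\|\mathbf{x}\|\le B_2\}$, and let $\rho\in[0,1]$. Consider the function classes (dropout outputs of a network with no hidden layer) \[ \mathcal{F}^{(I)}_\mathcal{W}=\{(\mathbf{x},\mathbf{r})\mapsto\langle\mathbf{w},\mathbf{x}\odot\mathbf{r}\rangle\colon\mathbf{w}\in\mathcal{W}\},\quad \mathcal{F}^{(II)}_\mathcal{W}=\{(\mathbf{x},\mathbf{r})\mapsto\langle\mathbf{w}\odot\mathbf{r},\mathbf{x}\rangle\colon\mathbf{w}\in\mathcal{W}\}, \] \[ \mathcal{F}^{(III)}_\mathcal{W}=\{(\mathbf{x},(\mathbf{r}_1,\mathbf{r}_2))\mapsto\langle\mathbf{w}\odot\mathbf{r}_1,\mathbf{x}\odot\mathbf{r}_2\rangle\colon\mathbf{w}\in\mathcal{W}\}, \] where $\mathbf{r},\mathbf{r}_1,\mathbf{r}_2\in\{0,1\}^d$ have i.i.d. Bern$(\rho)$ entries. Then \[ \mathfrak{R}_n(\mathcal{F}^{(I)}_\mathcal{W})=\mathfrak{R}_n(\mathcal{F}^{(II)}_\mathcal{W})\le B_1B_2\sqrt{\rho/n}\quad\text{and}\quad\mathfrak{R}_n(\mathcal{F}^{(III)}_\mathcal{W})\le B_1B_2\rho/\sqrt{n}. \]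
   Context: $\|\cdot\|$ is the Euclidean norm and $\odot$ the entrywise product. Inputs $\mathbf{x}_1,\dots,\mathbf{x}_n$ are drawn i.i.d. from a distribution on $\mathcal{X}$ (the $\mathcal{X}$-marginal of a distribution on $\mathcal{X}\times\mathcal{Y}$), and dropout variables $\mathbf{r}_1,\dots,\mathbf{r}_n$ (each a vector, or pair of vectors, as appropriate to the class) are drawn i.i.d. independently of the inputs with all entries i.i.d. Bern$(\rho)$. For a class $\mathcal{H}$ of functions $h(\mathbf{x},\mathbf{r})$, $\hat{\mathfrak{R}}_n(\mathcal{H},S_n,RS_n)=E_\epsilon[\sup_{h\in\mathcal{H}}\frac1n\sum_{i=1}^n\epsilon_i h(\mathbf{x}_i,\mathbf{r}_i)]$ with $\epsilon_i$ i.i.d. uniform on $\{\pm1\}$, and $\mathfrak{R}_n(\mathcal{H})=E_{S_n,RS_n}[\hat{\mathfrak{R}}_n(\mathcal{H},S_n,RS_n)]$. *)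

theory Defs
  imports "HOL-Analysis.Analysis" "HOL-Probability.Probability"
begin

text \<open>Entrywise product of a vector with a 0/1 dropout mask (mask encoded as 'd => bool,
  True meaning 1).\<close>
definition dmask :: "real ^ 'd \<Rightarrow> ('d \<Rightarrow> bool) \<Rightarrow> real ^ 'd" where
  "dmask x r = (\<chi> i. x $ i * of_bool (r i))"

definition dropout_pmf :: "real \<Rightarrow> ('d::finite \<Rightarrow> bool) pmf" where
  "dropout_pmf \<rho> = Pi_pmf UNIV False (\<lambda>_. bernoulli_pmf \<rho>)"

definition emp_rademacher ::
  "nat \<Rightarrow> ('x \<Rightarrow> 'r \<Rightarrow> real) set \<Rightarrow> (nat \<Rightarrow> 'x) \<Rightarrow> (nat \<Rightarrow> 'r) \<Rightarrow> real" where
  "emp_rademacher n H xs rs =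
     (\<Sum>\<epsilon>\<in>PiE {..<n} (\<lambda>_. {-1, 1::real}).
        (SUP h\<in>H. (1 / real n) * (\<Sum>i<n. \<epsilon> i * h (xs i) (rs i)))) / 2 ^ n"

definition rademacher ::
  "nat \<Rightarrow> 'x measure \<Rightarrow> 'r measure \<Rightarrow> ('x \<Rightarrow> 'r \<Rightarrow> real) set \<Rightarrow> real" where
  "rademacher n D R H =
     (\<integral>p. emp_rademacher n H (fst p) (snd p)
        \<partial>(PiM {..<n} (\<lambda>_. D) \<Otimes>\<^sub>M PiM {..<n} (\<lambda>_. R)))"

definition classI :: "real \<Rightarrow> (real ^ 'd \<Rightarrow> ('d \<Rightarrow> bool) \<Rightarrow> real) set" where
  "classI B1 = {(\<lambda>x r. w \<bullet> dmask x r) | w. norm w < B1}"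

definition classII :: "real \<Rightarrow> (real ^ 'd \<Rightarrow> ('d \<Rightarrow> bool) \<Rightarrow> real) set" where
  "classII B1 = {(\<lambda>x r. dmask w r \<bullet> x) | w. norm w < B1}"

definition classIII ::
  "real \<Rightarrow> (real ^ 'd \<Rightarrow> ('d \<Rightarrow> bool) \<times> ('d \<Rightarrow> bool) \<Rightarrow> real) set" where
  "classIII B1 = {(\<lambda>x r. dmask w (fst r) \<bullet> dmask x (snd r)) | w. norm w < B1}"

end

theory Submission
  imports Defs
begin


abbreviation "SGN n \<equiv> PiE {..<(n::nat)} (\<lambda>_. {-1, 1::real})"

lemma sgn_card: "card (SGN n) = 2 ^ n"
  by (simp add: card_PiE numeral_2_eq_2)

lemma sgn_finite: "finite (SGN n)"
  by (simp add: finite_PiE)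

lemma sgn_sq: "\<epsilon> \<in> SGN n \<Longrightarrow> i < n \<Longrightarrow> \<epsilon> i * \<epsilon> i = 1"
proof -
  assume "\<epsilon> \<in> SGN n" "i < n"
  then have "\<epsilon> i = -1 \<or> \<epsilon> i = 1" by (auto simp: PiE_iff)
  then show ?thesis by auto
qed

lemma sgn_cross:
  assumes "i < n" "k < n" "i \<noteq> k"
  shows "(\<Sum>\<epsilon>\<in>SGN n. \<epsilon> i * \<epsilon> k) = 0"
proof -
  define \<phi> where "\<phi> = (\<lambda>\<epsilon>::nat\<Rightarrow>real. \<epsilon>(i := - \<epsilon> i))"
  have mem: "\<phi> \<epsilon> \<in> SGN n" if "\<epsilon> \<in> SGN n" for \<epsilon>
    using that assms unfolding \<phi>_def by (auto simp: PiE_iff extensional_def)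
  have inv: "\<phi> (\<phi> \<epsilon>) = \<epsilon>" for \<epsilon> unfolding \<phi>_def by auto
  have bij: "bij_betw \<phi> (SGN n) (SGN n)"
    by (rule bij_betw_byWitness[where f'=\<phi>]) (use mem inv in auto)
  have "(\<Sum>\<epsilon>\<in>SGN n. \<epsilon> i * \<epsilon> k) = (\<Sum>\<epsilon>\<in>SGN n. \<phi> \<epsilon> i * \<phi> \<epsilon> k)"
    using sum.reindex_bij_betw[OF bij, of "\<lambda>\<epsilon>. \<epsilon> i * \<epsilon> k"] by simp
  also have "\<dots> = - (\<Sum>\<epsilon>\<in>SGN n. \<epsilon> i * \<epsilon> k)"
    using assms by (simp add: \<phi>_def sum_negf[symmetric])
  finally show ?thesis by simp
qed

lemma sgn_norm:
  fixes u :: "nat \<Rightarrow> 'a::real_inner"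
  shows "(\<Sum>\<epsilon>\<in>SGN n. (norm (\<Sum>i<n. \<epsilon> i *\<^sub>R u i))\<^sup>2) = 2 ^ n * (\<Sum>i<n. (norm (u i))\<^sup>2)"
proof -
  have "(\<Sum>\<epsilon>\<in>SGN n. (norm (\<Sum>i<n. \<epsilon> i *\<^sub>R u i))\<^sup>2)
      = (\<Sum>\<epsilon>\<in>SGN n. \<Sum>i<n. \<Sum>k<n. (\<epsilon> i * \<epsilon> k) * (u k \<bullet> u i))"
    by (simp add: power2_norm_eq_inner inner_sum_left inner_sum_right sum_distrib_left mult.assoc)
  also have "\<dots> = (\<Sum>i<n. \<Sum>k<n. (u k \<bullet> u i) * (\<Sum>\<epsilon>\<in>SGN n. \<epsilon> i * \<epsilon> k))"
    by (simp add: sum.swap[of _ "SGN n"] sum_distrib_left mult.commute)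
  also have "\<dots> = (\<Sum>i<n. \<Sum>k<n. if k = i then (u i \<bullet> u i) * 2 ^ n else 0)"
  proof (intro sum.cong refl)
    fix i k assume "i \<in> {..<n}" "k \<in> {..<n}"
    then show "(u k \<bullet> u i) * (\<Sum>\<epsilon>\<in>SGN n. \<epsilon> i * \<epsilon> k) = (if k = i then (u i \<bullet> u i) * 2 ^ n else 0)"
      using sgn_cross[of i n k] sgn_sq[of _ n i] sgn_card[of n] by auto
  qed
  also have "\<dots> = 2 ^ n * (\<Sum>i<n. (norm (u i))\<^sup>2)"
    by (simp add: power2_norm_eq_inner sum_distrib_left mult.commute)
  finally show ?thesis .
qed

lemma class_image: "{(\<lambda>x r. w \<bullet> dmask x (m r)) | w. norm w < B1} = (\<lambda>w x r. w \<bullet> dmask x (m r)) ` {w. norm w < B1}"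
  by blast

lemma sup_bound:
  fixes m :: "'r \<Rightarrow> 'd::finite \<Rightarrow> bool" and xs :: "nat \<Rightarrow> real ^ 'd"
  assumes "B1 > 0" "c > 0" "n > 0"
  defines "H \<equiv> {(\<lambda>x r. w \<bullet> dmask x (m r)) | w. norm w < B1}"
  shows "(SUP h\<in>H. (1 / real n) * (\<Sum>i<n. \<epsilon> i * h (xs i) (rs i)))
           \<le> B1 / n * ((norm (\<Sum>i<n. \<epsilon> i *\<^sub>R dmask (xs i) (m (rs i))))\<^sup>2 + c\<^sup>2) / (2 * c)"
    and "0 \<le> (SUP h\<in>H. (1 / real n) * (\<Sum>i<n. \<epsilon> i * h (xs i) (rs i)))"
proof -
  define v where "v = (\<Sum>i<n. \<epsilon> i *\<^sub>R dmask (xs i) (m (rs i)))"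
  have eq: "(1 / real n) * (\<Sum>i<n. \<epsilon> i * (w \<bullet> dmask (xs i) (m (rs i)))) = (1 / real n) * (w \<bullet> v)" for w
    by (simp add: v_def inner_sum_right)
  have am: "B1 * norm v \<le> B1 * ((norm v)\<^sup>2 + c\<^sup>2) / (2 * c)"
  proof -
    have "2 * c * norm v \<le> (norm v)\<^sup>2 + c\<^sup>2" using sum_squares_bound[of "norm v" c] by (simp add: algebra_simps)
    then have nv: "norm v \<le> ((norm v)\<^sup>2 + c\<^sup>2) / (2 * c)" using assms by (simp add: field_simps)
    show ?thesis using mult_left_mono[OF nv, of B1] assms by simp
  qed
  have bnd: "(1 / real n) * (w \<bullet> v) \<le> B1 / n * ((norm v)\<^sup>2 + c\<^sup>2) / (2 * c)" if "norm w < B1" for w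
  proof -
    have "w \<bullet> v \<le> norm w * norm v" by (rule norm_cauchy_schwarz)
    also have "\<dots> \<le> B1 * norm v" using that by (intro mult_right_mono) auto
    also have "\<dots> \<le> B1 * ((norm v)\<^sup>2 + c\<^sup>2) / (2 * c)" by (rule am)
    finally show ?thesis using assms by (simp add: divide_right_mono field_simps)
  qed
  have H: "H = (\<lambda>w x r. w \<bullet> dmask x (m r)) ` {w. norm w < B1}" unfolding H_def by blast
  have S: "(SUP h\<in>H. (1 / real n) * (\<Sum>i<n. \<epsilon> i * h (xs i) (rs i))) = (SUP w\<in>{w. norm w < B1}. (1 / real n) * (w \<bullet> v))"
    unfolding H image_image eq ..
  have ne: "{w::real^'d. norm w < B1} \<noteq> {}" using assms by (auto intro!: exI[of _ 0])
  show "(SUP h\<in>H. (1 / real n) * (\<Sum>i<n. \<epsilon> i * h (xs i) (rs i)))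
           \<le> B1 / n * ((norm (\<Sum>i<n. \<epsilon> i *\<^sub>R dmask (xs i) (m (rs i))))\<^sup>2 + c\<^sup>2) / (2 * c)"
    unfolding S v_def[symmetric] by (rule cSUP_least[OF ne]) (use bnd in auto)
  have bdd: "bdd_above ((\<lambda>w. (1 / real n) * (w \<bullet> v)) ` {w. norm w < B1})"
    by (rule bdd_aboveI2[where M="B1 / n * ((norm v)\<^sup>2 + c\<^sup>2) / (2 * c)"]) (use bnd in auto)
  have "(1 / real n) * (0 \<bullet> v) \<le> (SUP w\<in>{w. norm w < B1}. (1 / real n) * (w \<bullet> v))"
    by (rule cSUP_upper[OF _ bdd]) (use assms in auto)
  then show "0 \<le> (SUP h\<in>H. (1 / real n) * (\<Sum>i<n. \<epsilon> i * h (xs i) (rs i)))" unfolding S by simp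
qed

lemma emp_bound:
  fixes m :: "'r \<Rightarrow> 'd::finite \<Rightarrow> bool" and xs :: "nat \<Rightarrow> real ^ 'd"
  assumes "B1 > 0" "c > 0" "n > 0"
  shows "emp_rademacher n {(\<lambda>x r. w \<bullet> dmask x (m r)) | w. norm w < B1} xs rs
           \<le> B1 / n * ((\<Sum>i<n. (norm (dmask (xs i) (m (rs i))))\<^sup>2) + c\<^sup>2) / (2 * c)"
    and "0 \<le> emp_rademacher n {(\<lambda>x r. w \<bullet> dmask x (m r)) | w. norm w < B1} xs rs"
proof -
  let ?H = "{(\<lambda>x r. w \<bullet> dmask x (m r)) | w. norm w < B1}"
  let ?S = "\<lambda>\<epsilon>. (SUP h\<in>?H. (1 / real n) * (\<Sum>i<n. \<epsilon> i * h (xs i) (rs i)))"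
  let ?v = "\<lambda>\<epsilon>. norm (\<Sum>i<n. \<epsilon> i *\<^sub>R dmask (xs i) (m (rs i)))"
  let ?q = "\<Sum>i<n. (norm (dmask (xs i) (m (rs i))))\<^sup>2"
  have "(\<Sum>\<epsilon>\<in>SGN n. ?S \<epsilon>) \<le> (\<Sum>\<epsilon>\<in>SGN n. B1 / n * ((?v \<epsilon>)\<^sup>2 + c\<^sup>2) / (2 * c))"
    by (rule sum_mono) (rule sup_bound(1)[OF assms])
  also have "\<dots> = B1 / n / (2 * c) * ((\<Sum>\<epsilon>\<in>SGN n. (?v \<epsilon>)\<^sup>2) + real (card (SGN n)) * c\<^sup>2)"
    by (simp add: sum_divide_distrib[symmetric] sum_distrib_left[symmetric] sum.distrib)
  also have "\<dots> = B1 / n / (2 * c) * (2 ^ n * (?q + c\<^sup>2))"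
    by (simp only: sgn_norm sgn_card) (simp add: algebra_simps)
  finally have "(\<Sum>\<epsilon>\<in>SGN n. ?S \<epsilon>) / 2 ^ n \<le> B1 / n / (2 * c) * (2 ^ n * (?q + c\<^sup>2)) / 2 ^ n"
    by (rule divide_right_mono) simp
  also have "B1 / n / (2 * c) * (2 ^ n * (?q + c\<^sup>2)) / 2 ^ n = B1 / n * (?q + c\<^sup>2) / (2 * c)"
    by simp
  finally show "emp_rademacher n ?H xs rs \<le> B1 / n * (?q + c\<^sup>2) / (2 * c)"
    unfolding emp_rademacher_def .
  have "0 \<le> (\<Sum>\<epsilon>\<in>SGN n. ?S \<epsilon>)"
    by (rule sum_nonneg) (rule sup_bound(2)[OF assms])
  then show "0 \<le> emp_rademacher n ?H xs rs" unfolding emp_rademacher_def by simp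
qed



lemma norm_dmask_sq: "(norm (dmask (x::real^'d::finite) r))\<^sup>2 = (\<Sum>j\<in>UNIV. (x $ j)\<^sup>2 * of_bool (r j))"
  unfolding power2_norm_eq_inner inner_vec_def dmask_def
  by (intro sum.cong) (auto simp: power2_eq_square)

lemma nth_meas:
  assumes "sets D = sets (borel :: (real^'d::finite) measure)"
  shows "(\<lambda>x. x $ j) \<in> borel_measurable D"
  unfolding measurable_cong_sets[OF assms refl]
  by (intro borel_measurable_continuous_onI continuous_on_component continuous_on_id)

lemma marg:
  assumes "prob_space M" "i < n" "g \<in> borel_measurable M"
  shows "(\<integral>\<^sup>+\<omega>. g (\<omega> i) \<partial>PiM {..<n} (\<lambda>_. M)) = (\<integral>\<^sup>+x. g x \<partial>M)"
proof -
  have "(\<integral>\<^sup>+x. g x \<partial>M) = (\<integral>\<^sup>+x. g x \<partial>distr (PiM {..<n} (\<lambda>_. M)) M (\<lambda>\<omega>. \<omega> i))"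
    using distr_PiM_component[of "{..<n}" "\<lambda>_. M" i] assms by simp
  also have "\<dots> = (\<integral>\<^sup>+\<omega>. g (\<omega> i) \<partial>PiM {..<n} (\<lambda>_. M))"
    using assms by (intro nn_integral_distr) auto
  finally show ?thesis ..
qed



lemma norm_sq_sum: "(norm (x::real^'d::finite))\<^sup>2 = (\<Sum>j\<in>UNIV. (x $ j)\<^sup>2)"
  unfolding power2_norm_eq_inner inner_vec_def by (simp add: power2_eq_square)

lemma inner_term:
  fixes P :: "'r pmf" and m :: "'r \<Rightarrow> 'd \<Rightarrow> bool"
  assumes "i < n" "a \<ge> 0" "measure_pmf.prob P {r. m r j} \<le> pr"
  shows "(\<integral>\<^sup>+rs. ennreal (a * of_bool (m (rs i) j)) \<partial>PiM {..<n} (\<lambda>_. measure_pmf P)) \<le> ennreal (a * pr)"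
proof -
  have "(\<integral>\<^sup>+rs. ennreal (a * of_bool (m (rs i) j)) \<partial>PiM {..<n} (\<lambda>_. measure_pmf P))
      = (\<integral>\<^sup>+r. ennreal (a * of_bool (m r j)) \<partial>measure_pmf P)"
    using assms by (intro marg) (auto simp: prob_space_measure_pmf)
  also have "\<dots> = (\<integral>\<^sup>+r. ennreal a * indicator {r. m r j} r \<partial>measure_pmf P)"
    using assms by (intro nn_integral_cong) (auto simp: indicator_def)
  also have "\<dots> = ennreal a * emeasure (measure_pmf P) {r. m r j}"
    by (subst nn_integral_cmult) auto
  also have "\<dots> = ennreal a * ennreal (measure_pmf.prob P {r. m r j})"
    by (simp add: measure_pmf.emeasure_eq_measure)
  also have "\<dots> \<le> ennreal a * ennreal pr"
    using assms by (intro mult_left_mono ennreal_leI) auto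
  also have "\<dots> = ennreal (a * pr)" using assms by (simp add: ennreal_mult')
  finally show ?thesis .
qed

lemma inner_meas:
  fixes P :: "'r pmf" and m :: "'r \<Rightarrow> 'd \<Rightarrow> bool"
  assumes "i < n"
  shows "(\<lambda>rs. g (rs i)) \<in> borel_measurable (PiM {..<n} (\<lambda>_. measure_pmf P))"
  by (rule measurable_compose[OF measurable_component_singleton[of i]]) (use assms in auto)

lemma inner_sum:
  fixes P :: "'r pmf" and m :: "'r \<Rightarrow> 'd::finite \<Rightarrow> bool" and xs :: "nat \<Rightarrow> real^'d"
  assumes "\<forall>j. measure_pmf.prob P {r. m r j} \<le> pr"
  shows "(\<integral>\<^sup>+rs. ennreal (\<Sum>i<n. \<Sum>j\<in>UNIV. (xs i $ j)\<^sup>2 * of_bool (m (rs i) j)) \<partial>PiM {..<n} (\<lambda>_. measure_pmf P))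
         \<le> ennreal (pr * (\<Sum>i<n. (norm (xs i))\<^sup>2))"
proof -
  have "(\<integral>\<^sup>+rs. ennreal (\<Sum>i<n. \<Sum>j\<in>UNIV. (xs i $ j)\<^sup>2 * of_bool (m (rs i) j)) \<partial>PiM {..<n} (\<lambda>_. measure_pmf P))
      = (\<integral>\<^sup>+rs. (\<Sum>i<n. \<Sum>j\<in>UNIV. ennreal ((xs i $ j)\<^sup>2 * of_bool (m (rs i) j))) \<partial>PiM {..<n} (\<lambda>_. measure_pmf P))"
    by (intro nn_integral_cong) (simp add: sum_nonneg)
  also have "\<dots> = (\<Sum>i<n. \<Sum>j\<in>UNIV. (\<integral>\<^sup>+rs. ennreal ((xs i $ j)\<^sup>2 * of_bool (m (rs i) j)) \<partial>PiM {..<n} (\<lambda>_. measure_pmf P)))"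
  proof -
    have "(\<integral>\<^sup>+rs. (\<Sum>i<n. \<Sum>j\<in>UNIV. ennreal ((xs i $ j)\<^sup>2 * of_bool (m (rs i) j))) \<partial>PiM {..<n} (\<lambda>_. measure_pmf P))
       = (\<Sum>i<n. (\<integral>\<^sup>+rs. (\<Sum>j\<in>UNIV. ennreal ((xs i $ j)\<^sup>2 * of_bool (m (rs i) j))) \<partial>PiM {..<n} (\<lambda>_. measure_pmf P)))"
    proof (rule nn_integral_sum)
      fix i assume "i \<in> {..<n}"
      then show "(\<lambda>rs. \<Sum>j\<in>UNIV. ennreal ((xs i $ j)\<^sup>2 * of_bool (m (rs i) j))) \<in> borel_measurable (PiM {..<n} (\<lambda>_. measure_pmf P))"
        by (intro inner_meas[where g="\<lambda>r. \<Sum>j\<in>UNIV. ennreal ((xs i $ j)\<^sup>2 * of_bool (m r j))"]) auto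
    qed
    also have "\<dots> = (\<Sum>i<n. \<Sum>j\<in>UNIV. (\<integral>\<^sup>+rs. ennreal ((xs i $ j)\<^sup>2 * of_bool (m (rs i) j)) \<partial>PiM {..<n} (\<lambda>_. measure_pmf P)))"
    proof (intro sum.cong refl nn_integral_sum)
      fix i j assume "i \<in> {..<n}"
      then show "(\<lambda>rs. ennreal ((xs i $ j)\<^sup>2 * of_bool (m (rs i) j))) \<in> borel_measurable (PiM {..<n} (\<lambda>_. measure_pmf P))"
        by (intro inner_meas[where g="\<lambda>r. ennreal ((xs i $ j)\<^sup>2 * of_bool (m r j))"]) auto
    qed
    finally show ?thesis .
  qed
  also have "\<dots> \<le> (\<Sum>i<n. \<Sum>j\<in>UNIV. ennreal ((xs i $ j)\<^sup>2 * pr))"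
    by (intro sum_mono inner_term) (use assms in auto)
  also have "\<dots> = ennreal (pr * (\<Sum>i<n. (norm (xs i))\<^sup>2))"
  proof -
    have pr: "pr \<ge> 0" using assms measure_nonneg[of "measure_pmf P" "{r. m r undefined}"]
      by (meson order.trans)
    then show ?thesis
      by (simp add: sum_nonneg norm_sq_sum sum_distrib_left sum_distrib_right mult.commute)
  qed
  finally show ?thesis .
qed



lemma D_bound:
  fixes D :: "(real^'d::finite) measure"
  assumes "prob_space D" "AE x in D. norm x \<le> B2" "pr \<ge> 0"
  shows "(\<integral>\<^sup>+x. ennreal (pr * (norm x)\<^sup>2) \<partial>D) \<le> ennreal (pr * B2\<^sup>2)"
proof -
  have "(\<integral>\<^sup>+x. ennreal (pr * (norm x)\<^sup>2) \<partial>D) \<le> (\<integral>\<^sup>+x. ennreal (pr * B2\<^sup>2) \<partial>D)"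
  proof (rule nn_integral_mono_AE)
    show "AE x in D. ennreal (pr * (norm x)\<^sup>2) \<le> ennreal (pr * B2\<^sup>2)"
      using assms(2) by eventually_elim (use assms(3) in \<open>auto intro!: ennreal_leI mult_left_mono power_mono\<close>)
  qed
  also have "\<dots> = ennreal (pr * B2\<^sup>2)"
    using prob_space.emeasure_space_1[OF assms(1)] by simp
  finally show ?thesis .
qed

lemma prod_bound:
  fixes D :: "(real^'d::finite) measure" and P :: "'r pmf" and m :: "'r \<Rightarrow> 'd \<Rightarrow> bool" and n :: nat
  assumes D: "prob_space D" "sets D = sets borel" "AE x in D. norm x \<le> B2"
    and pr: "pr \<ge> 0" "\<forall>j. measure_pmf.prob P {r. m r j} \<le> pr"
  defines "f \<equiv> \<lambda>p. \<Sum>i<n. \<Sum>j\<in>UNIV. (fst p i $ j)\<^sup>2 * of_bool (m (snd p i) j)"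
  shows "f \<in> borel_measurable (PiM {..<n} (\<lambda>_. D) \<Otimes>\<^sub>M PiM {..<n} (\<lambda>_. measure_pmf P))"
    and "(\<integral>\<^sup>+p. ennreal (f p) \<partial>(PiM {..<n} (\<lambda>_. D) \<Otimes>\<^sub>M PiM {..<n} (\<lambda>_. measure_pmf P)))
           \<le> ennreal (pr * n * B2\<^sup>2)"
proof -
  let ?M1 = "PiM {..<n} (\<lambda>_. D)" and ?M2 = "PiM {..<n} (\<lambda>_. measure_pmf P)"
  have m1: "(\<lambda>p. fst p i $ j) \<in> borel_measurable (?M1 \<Otimes>\<^sub>M ?M2)" if "i < n" for i j
  proof -
    have "(\<lambda>p. fst p i) \<in> measurable (?M1 \<Otimes>\<^sub>M ?M2) D"
      by (rule measurable_compose[OF measurable_fst measurable_component_singleton]) (use that in auto)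
    then show ?thesis by (rule measurable_compose) (rule nth_meas[OF D(2)])
  qed
  have m2: "(\<lambda>p. of_bool (m (snd p i) j) :: real) \<in> borel_measurable (?M1 \<Otimes>\<^sub>M ?M2)" if "i < n" for i j
    by (rule measurable_compose[OF measurable_snd inner_meas[of i n "\<lambda>r. of_bool (m r j)"]]) (use that in auto)
  show fm: "f \<in> borel_measurable (?M1 \<Otimes>\<^sub>M ?M2)"
    unfolding f_def by (intro borel_measurable_sum borel_measurable_times borel_measurable_power m1 m2) auto
  interpret M2: prob_space ?M2 by (intro prob_space_PiM prob_space_measure_pmf)
  have "(\<integral>\<^sup>+p. ennreal (f p) \<partial>(?M1 \<Otimes>\<^sub>M ?M2)) = (\<integral>\<^sup>+xs. \<integral>\<^sup>+rs. ennreal (f (xs, rs)) \<partial>?M2 \<partial>?M1)"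
    by (rule M2.nn_integral_fst[symmetric]) (use fm in measurable)
  also have "\<dots> \<le> (\<integral>\<^sup>+xs. ennreal (pr * (\<Sum>i<n. (norm (xs i))\<^sup>2)) \<partial>?M1)"
    by (intro nn_integral_mono) (unfold f_def fst_conv snd_conv, rule inner_sum[OF pr(2)])
  also have "\<dots> = (\<integral>\<^sup>+xs. (\<Sum>i<n. ennreal (pr * (norm (xs i))\<^sup>2)) \<partial>?M1)"
    using pr(1) by (intro nn_integral_cong) (simp add: sum_distrib_left)
  also have "\<dots> = (\<Sum>i<n. \<integral>\<^sup>+xs. ennreal (pr * (norm (xs i))\<^sup>2) \<partial>?M1)"
  proof (rule nn_integral_sum)
    fix i assume i: "i \<in> {..<n}"
    have "(\<lambda>xs. xs i) \<in> measurable ?M1 D" by (rule measurable_component_singleton) (use i in auto)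
    moreover have "(\<lambda>x. ennreal (pr * (norm x)\<^sup>2)) \<in> borel_measurable D"
      unfolding measurable_cong_sets[OF D(2) refl] by measurable
    ultimately show "(\<lambda>xs. ennreal (pr * (norm (xs i))\<^sup>2)) \<in> borel_measurable ?M1"
      by (rule measurable_compose)
  qed
  also have "\<dots> = (\<Sum>i<n. \<integral>\<^sup>+x. ennreal (pr * (norm x)\<^sup>2) \<partial>D)"
  proof (intro sum.cong refl marg)
    show "prob_space D" by (rule D(1))
    show "(\<lambda>x. ennreal (pr * (norm x)\<^sup>2)) \<in> borel_measurable D"
      unfolding measurable_cong_sets[OF D(2) refl] by measurable
  qed auto
  also have "\<dots> \<le> (\<Sum>i<n. ennreal (pr * B2\<^sup>2))"
    by (intro sum_mono D_bound D(1) D(3) pr(1))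
  also have "\<dots> = ennreal (pr * n * B2\<^sup>2)"
  proof -
    have "ennreal (pr * n * B2\<^sup>2) = ennreal (real n) * ennreal (pr * B2\<^sup>2)"
      by (subst ennreal_mult'[symmetric]) (auto simp: mult_ac)
    then show ?thesis by (simp add: ennreal_of_nat_eq_real_of_nat)
  qed
  finally show "(\<integral>\<^sup>+p. ennreal (f p) \<partial>(?M1 \<Otimes>\<^sub>M ?M2)) \<le> ennreal (pr * n * B2\<^sup>2)" .
qed



lemma generic_c:
  fixes D :: "(real^'d::finite) measure" and P :: "'r pmf" and m :: "'r \<Rightarrow> 'd \<Rightarrow> bool" and n :: nat
  assumes B: "B1 > 0" "B2 > 0" and D: "prob_space D" "sets D = sets borel" "AE x in D. norm x \<le> B2"
    and pr: "pr \<ge> 0" "\<forall>j. measure_pmf.prob P {r. m r j} \<le> pr"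
    and n: "n > 0" and c: "c > 0"
  shows "rademacher n D (measure_pmf P) {(\<lambda>x r. w \<bullet> dmask x (m r)) | w. norm w < B1}
          \<le> B1 / n * (pr * n * B2\<^sup>2 + c\<^sup>2) / (2 * c)"
proof -
  let ?H = "{(\<lambda>x r. w \<bullet> dmask x (m r)) | w. norm w < B1}"
  let ?M = "PiM {..<n} (\<lambda>_. D) \<Otimes>\<^sub>M PiM {..<n} (\<lambda>_. measure_pmf P)"
  define f where "f = (\<lambda>p. \<Sum>i<n. \<Sum>j\<in>UNIV. (fst p i $ j)\<^sup>2 * (of_bool (m (snd p i) j) :: real))"
  define E where "E = (\<lambda>p. emp_rademacher n ?H (fst p) (snd p))"
  define \<alpha> where "\<alpha> = B1 / (n * (2 * c))"
  define \<beta> where "\<beta> = B1 / n * c\<^sup>2 / (2 * c)"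
  have \<alpha>: "\<alpha> \<ge> 0" and \<beta>: "\<beta> \<ge> 0" using B c by (auto simp: \<alpha>_def \<beta>_def)
  have fm: "f \<in> borel_measurable ?M" and fi: "(\<integral>\<^sup>+p. ennreal (f p) \<partial>?M) \<le> ennreal (pr * n * B2\<^sup>2)"
    unfolding f_def by (rule prod_bound[OF D pr])+
  have f0: "f p \<ge> 0" for p unfolding f_def by (intro sum_nonneg) auto
  interpret M: prob_space ?M
    by (intro prob_space_pair prob_space_PiM prob_space_measure_pmf D(1))
  have Ebd: "E p \<le> \<alpha> * f p + \<beta>" for p
  proof -
    have "f p = (\<Sum>i<n. (norm (dmask (fst p i) (m (snd p i))))\<^sup>2)"
      unfolding f_def norm_dmask_sq ..
    then show ?thesis using emp_bound(1)[OF B(1) c n, of m "fst p" "snd p"]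
      by (simp add: E_def \<alpha>_def \<beta>_def add_divide_distrib distrib_left)
  qed
  have E0: "E p \<ge> 0" for p unfolding E_def by (rule emp_bound(2)[OF B(1) c n])
  have RHS: "\<alpha> * (pr * n * B2\<^sup>2) + \<beta> = B1 / n * (pr * n * B2\<^sup>2 + c\<^sup>2) / (2 * c)"
    by (simp add: \<alpha>_def \<beta>_def add_divide_distrib distrib_left)
  have RHS0: "0 \<le> \<alpha> * (pr * n * B2\<^sup>2) + \<beta>" using \<alpha> \<beta> pr by simp
  show ?thesis
  proof (cases "integrable ?M E")
    case False
    then have "rademacher n D (measure_pmf P) ?H = 0"
      unfolding rademacher_def E_def[symmetric] by (rule not_integrable_integral_eq)
    then show ?thesis using RHS RHS0 by simp
  next
    case True
    then have Em: "E \<in> borel_measurable ?M" by blast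
    have "rademacher n D (measure_pmf P) ?H = enn2real (\<integral>\<^sup>+p. ennreal (E p) \<partial>?M)"
      unfolding rademacher_def E_def[symmetric] by (rule integral_eq_nn_integral[OF Em]) (use E0 in auto)
    also have "\<dots> \<le> \<alpha> * (pr * n * B2\<^sup>2) + \<beta>"
    proof (rule enn2real_leI[OF RHS0])
      have "(\<integral>\<^sup>+p. ennreal (E p) \<partial>?M) \<le> (\<integral>\<^sup>+p. ennreal \<alpha> * ennreal (f p) + ennreal \<beta> \<partial>?M)"
      proof (intro nn_integral_mono)
        fix p
        have "ennreal \<alpha> * ennreal (f p) + ennreal \<beta> = ennreal (\<alpha> * f p + \<beta>)"
          using \<alpha> \<beta> f0[of p] by (simp add: ennreal_mult' ennreal_plus mult_nonneg_nonneg)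
        then show "ennreal (E p) \<le> ennreal \<alpha> * ennreal (f p) + ennreal \<beta>"
          using Ebd[of p] by (simp add: ennreal_leI)
      qed
      also have "\<dots> = ennreal \<alpha> * (\<integral>\<^sup>+p. ennreal (f p) \<partial>?M) + ennreal \<beta>"
        using fm M.emeasure_space_1 by (simp add: nn_integral_add nn_integral_cmult)
      also have "\<dots> \<le> ennreal \<alpha> * ennreal (pr * n * B2\<^sup>2) + ennreal \<beta>"
        by (intro add_mono mult_left_mono fi) auto
      also have "\<dots> = ennreal (\<alpha> * (pr * n * B2\<^sup>2) + \<beta>)"
        using \<alpha> \<beta> pr by (simp add: ennreal_mult' ennreal_plus mult_nonneg_nonneg)
      finally show "(\<integral>\<^sup>+p. ennreal (E p) \<partial>?M) \<le> ennreal (\<alpha> * (pr * n * B2\<^sup>2) + \<beta>)" .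
    qed
    finally show ?thesis using RHS by simp
  qed
qed



lemma generic:
  fixes D :: "(real^'d::finite) measure" and P :: "'r pmf" and m :: "'r \<Rightarrow> 'd \<Rightarrow> bool" and n :: nat
  assumes B: "B1 > 0" "B2 > 0" and D: "prob_space D" "sets D = sets borel" "AE x in D. norm x \<le> B2"
    and pr: "pr \<ge> 0" "\<forall>j. measure_pmf.prob P {r. m r j} \<le> pr"
  shows "rademacher n D (measure_pmf P) {(\<lambda>x r. w \<bullet> dmask x (m r)) | w. norm w < B1}
          \<le> B1 * B2 * sqrt (pr / n)"
proof (cases "n = 0")
  case True
  let ?H = "{(\<lambda>x r. w \<bullet> dmask x (m r)) | w. norm w < B1}"
  have ne: "?H \<noteq> {}" using B by (auto intro!: exI[of _ 0])
  have "emp_rademacher n ?H xs rs = 0" for xs rs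
    using True ne by (simp add: emp_rademacher_def)
  then show ?thesis using True by (simp add: rademacher_def)
next
  case False
  then have n: "n > 0" by simp
  let ?R = "rademacher n D (measure_pmf P) {(\<lambda>x r. w \<bullet> dmask x (m r)) | w. norm w < B1}"
  have bc: "?R \<le> B1 / n * (pr * n * B2\<^sup>2 + c\<^sup>2) / (2 * c)" if "c > 0" for c
    by (rule generic_c[OF B D pr n that])
  define s where "s = sqrt (pr / n)"
  have s0: "s \<ge> 0" using pr n by (simp add: s_def)
  have s2: "s\<^sup>2 = pr / n" using pr n by (simp add: s_def)
  show ?thesis
  proof (cases "s = 0")
    case True
    then have pr0: "pr = 0" using s2 n by simp
    have "?R \<le> 0"
    proof (rule ccontr)
      assume "\<not> ?R \<le> 0"
      then have R0: "?R > 0" by simp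
      define c where "c = ?R * n / B1"
      have c0: "c > 0" using R0 n B by (simp add: c_def)
      have "?R \<le> B1 / n * c\<^sup>2 / (2 * c)" using bc[OF c0] pr0 by simp
      also have "\<dots> = ?R / 2" using c0 n B by (simp add: c_def power2_eq_square field_simps)
      finally show False using R0 by simp
    qed
    moreover have "B1 * B2 * sqrt (pr / n) = 0" using True by (simp add: s_def)
    ultimately show ?thesis by linarith
  next
    case False
    define c where "c = s * n * B2"
    have c0: "c > 0" using False s0 n B by (simp add: c_def)
    have "pr * n * B2\<^sup>2 = c\<^sup>2" using s2 n by (simp add: c_def power_mult_distrib power2_eq_square field_simps)
    then have "?R \<le> B1 / n * (c\<^sup>2 + c\<^sup>2) / (2 * c)" using bc[OF c0] by simp
    also have "\<dots> = B1 * B2 * s" using c0 n by (simp add: c_def power2_eq_square field_simps)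
    finally show ?thesis by (simp add: s_def)
  qed
qed

lemma classI_eq: "classI B1 = {(\<lambda>x r. w \<bullet> dmask x (id r)) | w. norm w < B1}"
  unfolding classI_def by simp

lemma classII_eq: "classII B1 = (classI B1 :: (real^'d::finite \<Rightarrow> _) set)"
proof -
  have "dmask w r \<bullet> x = w \<bullet> dmask x r" for w x :: "real^'d" and r
    unfolding dmask_def inner_vec_def by (intro sum.cong) auto
  then show ?thesis unfolding classI_def classII_def by simp
qed

lemma classIII_eq: "classIII B1 = {(\<lambda>x r. w \<bullet> dmask x ((\<lambda>r j. fst r j \<and> snd r j) r)) | w::real^'d::finite. norm w < B1}"
proof -
  have "dmask w (fst r) \<bullet> dmask x (snd r) = w \<bullet> dmask x (\<lambda>j. fst r j \<and> snd r j)" for w x :: "real^'d" and r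
    unfolding dmask_def inner_vec_def by (intro sum.cong) auto
  then show ?thesis unfolding classIII_def by simp
qed

lemma prob_dropout:
  assumes "0 \<le> \<rho>" "\<rho> \<le> 1"
  shows "measure_pmf.prob (dropout_pmf \<rho> :: ('d::finite \<Rightarrow> bool) pmf) {r. r j} = \<rho>"
proof -
  have "measure_pmf.prob (dropout_pmf \<rho> :: ('d \<Rightarrow> bool) pmf) {r. r j}
      = measure_pmf.prob (map_pmf (\<lambda>f. f j) (dropout_pmf \<rho> :: ('d \<Rightarrow> bool) pmf)) {True}"
    by (simp add: vimage_def)
  also have "\<dots> = measure_pmf.prob (bernoulli_pmf \<rho>) {True}"
    unfolding dropout_pmf_def by (subst Pi_pmf_component) auto
  also have "\<dots> = \<rho>" using assms by (simp add: measure_pmf_single)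
  finally show ?thesis .
qed



theorem theorem2:
  fixes B1 B2 \<rho> :: real and n :: nat and D :: "(real ^ 'd) measure"
  assumes "B1 > 0" and "B2 > 0"
    and "0 \<le> \<rho>" and "\<rho> \<le> 1"
    and "prob_space D" and "sets D = sets borel"
    and "AE x in D. norm x \<le> B2"
  shows "rademacher n D (measure_pmf (dropout_pmf \<rho>)) (classI B1)
           = rademacher n D (measure_pmf (dropout_pmf \<rho>)) (classII B1)
       \<and> rademacher n D (measure_pmf (dropout_pmf \<rho>)) (classI B1) \<le> B1 * B2 * sqrt (\<rho> / real n)
       \<and> rademacher n D (measure_pmf (pair_pmf (dropout_pmf \<rho>) (dropout_pmf \<rho>))) (classIII B1)
           \<le> B1 * B2 * \<rho> / sqrt (real n)"
proof (intro conjI)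
  show "rademacher n D (measure_pmf (dropout_pmf \<rho>)) (classI B1)
           = rademacher n D (measure_pmf (dropout_pmf \<rho>)) (classII B1)"
    by (simp add: classII_eq)
  show "rademacher n D (measure_pmf (dropout_pmf \<rho>)) (classI B1) \<le> B1 * B2 * sqrt (\<rho> / real n)"
    unfolding classI_eq
    by (rule generic[OF assms(1,2,5,6,7) assms(3)]) (simp add: prob_dropout assms(3,4))
  let ?m = "\<lambda>(r::('d \<Rightarrow> bool) \<times> ('d \<Rightarrow> bool)) j. fst r j \<and> snd r j"
  have pp: "measure_pmf.prob (pair_pmf (dropout_pmf \<rho>) (dropout_pmf \<rho>)) {r. ?m r j} \<le> \<rho> * \<rho>" for j
  proof -
    have "{r. ?m r j} = {r::'d\<Rightarrow>bool. r j} \<times> {r. r j}" by auto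
    then have "measure_pmf.prob (pair_pmf (dropout_pmf \<rho>) (dropout_pmf \<rho>)) {r. ?m r j}
        = measure_pmf.prob (dropout_pmf \<rho>) {r::'d\<Rightarrow>bool. r j} * measure_pmf.prob (dropout_pmf \<rho>) {r::'d\<Rightarrow>bool. r j}"
      by (simp add: measure_pmf_prob_product countable_finite)
    then show ?thesis by (simp add: prob_dropout assms(3,4))
  qed
  have "rademacher n D (measure_pmf (pair_pmf (dropout_pmf \<rho>) (dropout_pmf \<rho>))) (classIII B1)
      \<le> B1 * B2 * sqrt (\<rho> * \<rho> / real n)"
    unfolding classIII_eq
    by (rule generic[OF assms(1,2,5,6,7), of "\<rho> * \<rho>" _ ?m]) (use pp assms(3) in auto)
  also have "sqrt (\<rho> * \<rho> / real n) = \<rho> / sqrt (real n)"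
    using assms(3) by (simp add: real_sqrt_divide)
  finally show "rademacher n D (measure_pmf (pair_pmf (dropout_pmf \<rho>) (dropout_pmf \<rho>))) (classIII B1)
           \<le> B1 * B2 * \<rho> / sqrt (real n)" by simp
qed


end
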